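(* Let $\bar L>0$, $\mu\ge0$ with $\bar L\ge\mu$, $p\in(0,1]$, $\alpha,\tau,\beta\in(0,1]$ and $\Gamma_0\ge1$. Set $\theta_{\min}=\frac14\min\{1,\frac\alpha p,\frac\tau p,\frac\beta p\}$ and for $t\ge0$ let $\bar\theta_{t+1}$ be the largest root of $p\bar L\Gamma_t\theta^2+p(\bar L+\Gamma_t\mu)\theta-(\bar L+\Gamma_t\mu)=0$, $\theta_{t+1}=\min\{\bar\theta_{t+1},\theta_{\min}\}$, $\gamma_{t+1}=\frac{p\theta_{t+1}\Gamma_t}{1-p\theta_{t+1}}$, $\Gamma_{t+1}=\Gamma_t+\gamma_{t+1}$. Then: 1. $\theta_{t+1},\gamma_{t+1},\Gamma_{t+1}$ are well defined and $\theta_{t+1},\gamma_{t+1}\ge0$ for all $t\ge0$; 2. $\gamma_{t+1}=p\theta_{t+1}\Gamma_{t+1}$ for all $t\ge0$; 3. $\bar L\theta_{t+1}\gamma_{t+1}\le\bar L+\Gamma_t\mu$ for all $t\ge0$; 4. $\Gamma_t\ge\frac{\Gamma_0}{2}\exp\big(t\min\{\sqrt{\frac{p\mu}{4\bar L}},p\theta_{\min}\}\big)$ for all $t\ge0$; 5. with $\bar t=\max\{\lceil\frac{1}{p\theta_{\min}}\log\frac{1}{2\Gamma_0p\theta_{\min}^2}\rceil,0\}$, $\Gamma_t\ge\frac{\Gamma_0}{2}\exp(tp\theta_{\min})$ for $t<\bar t$ and $\Gamma_t\ge\frac{1}{4p\theta_{\min}^2}+\frac{p(t-\bar t)^2}{16}$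 for $t\ge\bar t$; 6. $(\theta_{t+1})_{t\ge0}$ is non-increasing.
   Context: These are the learning-rate sequences used by the distributed optimization method 2Direction (there $\alpha$ is the contraction parameter of the server compressor, $\tau$ a momentum, $p$ a probability, and $\beta=1/(\omega+1)$ with $\omega\ge0$). *)

theory Defs
  imports Complex_Main
begin

definition theta_min :: "real \<Rightarrow> real \<Rightarrow> real \<Rightarrow> real \<Rightarrow> real" where
  "theta_min p alpha tau beta = (1/4) * min 1 (min (alpha/p) (min (tau/p) (beta/p)))"

definition quad :: "real \<Rightarrow> real \<Rightarrow> real \<Rightarrow> real \<Rightarrow> real \<Rightarrow> real" where
  "quad L mu p G th = p * L * G * th^2 + p * (L + G * mu) * th - (L + G * mu)"

definition thetabar :: "real \<Rightarrow> real \<Rightarrow> real \<Rightarrow> real \<Rightarrow> real" where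
  "thetabar L mu p G = (GREATEST th. quad L mu p G th = 0)"

text \<open>theta_{t+1} as a function of Gamma_t.\<close>
definition theta_step :: "real \<Rightarrow> real \<Rightarrow> real \<Rightarrow> real \<Rightarrow> real \<Rightarrow> real \<Rightarrow> real \<Rightarrow> real" where
  "theta_step L mu p alpha tau beta G = min (thetabar L mu p G) (theta_min p alpha tau beta)"

text \<open>gamma_{t+1} as a function of Gamma_t.\<close>
definition gamma_step :: "real \<Rightarrow> real \<Rightarrow> real \<Rightarrow> real \<Rightarrow> real \<Rightarrow> real \<Rightarrow> real \<Rightarrow> real" where
  "gamma_step L mu p alpha tau beta G =
     p * theta_step L mu p alpha tau beta G * G / (1 - p * theta_step L mu p alpha tau beta G)"

primrec Gam :: "real \<Rightarrow> real \<Rightarrow> real \<Rightarrow> real \<Rightarrow> real \<Rightarrow> real \<Rightarrow> real \<Rightarrow> nat \<Rightarrow> real" where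
  "Gam L mu p alpha tau beta G0 0 = G0"
| "Gam L mu p alpha tau beta G0 (Suc t) =
     Gam L mu p alpha tau beta G0 t + gamma_step L mu p alpha tau beta (Gam L mu p alpha tau beta G0 t)"

end

theory Submission imports Defs begin

lemma cpos: fixes L mu G :: real assumes "L > 0" "mu \<ge> 0" "G > 0" shows "L + G*mu > 0" "L + G*mu \<ge> L" "L + G*mu \<ge> G*mu"
proof -
  have "G*mu \<ge> 0" using assms by (intro mult_nonneg_nonneg) auto
  thus "L + G*mu > 0" "L + G*mu \<ge> L" "L + G*mu \<ge> G*mu" using assms by linarith+
qed

lemma quad_mono:
  assumes "L > 0" "mu \<ge> 0" "p > 0" "G > 0" "0 \<le> x" "x < y"
  shows "quad L mu p G x < quad L mu p G y"
proof -
  have "x^2 \<le> y^2" using assms by (intro power_mono) auto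
  hence 1: "p*L*G*x^2 \<le> p*L*G*y^2" using assms by (intro mult_left_mono) auto
  have "p*(L+G*mu) > 0" using assms cpos[of L mu G] by (intro mult_pos_pos) auto
  hence 2: "p*(L+G*mu)*x < p*(L+G*mu)*y" using assms by (intro mult_strict_left_mono) auto
  show ?thesis unfolding quad_def using 1 2 by linarith
qed

lemma tb_props:
  assumes "L > 0" "mu \<ge> 0" "p > 0" "G > 0"
  shows "0 < thetabar L mu p G \<and> quad L mu p G (thetabar L mu p G) = 0 \<and>
    (\<forall>x. quad L mu p G x = 0 \<longrightarrow> x \<le> thetabar L mu p G)"
proof -
  define a where "a = p*L*G"
  define b where "b = p*(L+G*mu)"
  define c where "c = L+G*mu"
  have a: "a > 0" using assms unfolding a_def by auto
  have b: "b > 0" using assms unfolding b_def using cpos[of L mu G] by (intro mult_pos_pos) auto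
  have c: "c > 0" using assms unfolding c_def by (intro add_pos_nonneg) auto
  define s where "s = sqrt (b^2 + 4*a*c)"
  have ss: "s^2 = b^2 + 4*a*c" unfolding s_def using a c
    by (intro real_sqrt_pow2) (auto intro: add_nonneg_nonneg)
  have "sqrt (b^2) < s" unfolding s_def using a c by (intro real_sqrt_less_mono) auto
  hence sb: "b < s" using b by simp
  define r where "r = (s - b)/(2*a)"
  have r0: "r > 0" unfolding r_def using a sb by auto
  have q: "quad L mu p G x = a*x^2 + b*x - c" for x unfolding quad_def a_def b_def c_def by simp
  have "a*r^2 + b*r - c = ((s-b)^2 + 2*b*(s-b) - 4*a*c)/(4*a)"
    unfolding r_def using a by (simp add: field_simps power2_eq_square)
  also have "\<dots> = 0" using ss by (simp add: algebra_simps power2_eq_square)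
  finally have qr: "quad L mu p G r = 0" using q by simp
  have mx: "x \<le> r" if "quad L mu p G x = 0" for x
  proof (rule ccontr)
    assume "\<not> x \<le> r"
    hence "quad L mu p G r < quad L mu p G x" using assms r0 by (intro quad_mono) auto
    thus False using qr that by simp
  qed
  have "thetabar L mu p G = r" unfolding thetabar_def
    by (rule Greatest_equality) (use qr mx in auto)
  thus ?thesis using r0 qr mx by simp
qed

lemma min_help: fixes a b c d e :: real assumes "a = c*e" "b \<le> d*e" "e \<ge> 0"
  shows "min a b \<le> min c d * e"
proof (cases "c \<le> d")
  case True
  hence "min c d * e = c*e" by simp
  thus ?thesis using assms by simp
next
  case False
  hence "min c d * e = d*e" by simp
  thus ?thesis using assms by simp
qed

lemma quad_id: "G1 * quad L mu p G2 x - G2 * quad L mu p G1 x = (1 - p*x)*(G2 - G1)*L"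
  unfolding quad_def by algebra

context
  fixes L mu p alpha tau beta :: real
  assumes L: "L > 0" and mu: "mu \<ge> 0" and Lmu: "L \<ge> mu"
    and p: "0 < p" "p \<le> 1"
    and al: "0 < alpha" "alpha \<le> 1" and ta: "0 < tau" "tau \<le> 1" and be: "0 < beta" "beta \<le> 1"
begin

lemma tmin_facts: "0 < theta_min p alpha tau beta" "theta_min p alpha tau beta \<le> 1/4"
  "p * theta_min p alpha tau beta \<le> 1/4"
proof -
  show a: "0 < theta_min p alpha tau beta" unfolding theta_min_def using p al ta be by auto
  show b: "theta_min p alpha tau beta \<le> 1/4" unfolding theta_min_def by auto
  have "p * theta_min p alpha tau beta \<le> 1 * (1/4)" using a b p by (intro mult_mono) auto
  thus "p * theta_min p alpha tau beta \<le> 1/4" by simp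
qed

lemma tb_eq:
  assumes G: "G > 0"
  shows "p*L*G*(thetabar L mu p G)^2 = (L+G*mu)*(1-p*thetabar L mu p G)"
    "p * thetabar L mu p G < 1" "thetabar L mu p G > 0"
proof -
  let ?u = "thetabar L mu p G"
  have "quad L mu p G ?u = 0" using tb_props[OF L mu p(1) G] by blast
  thus e: "p*L*G*?u^2 = (L+G*mu)*(1-p*?u)" unfolding quad_def by (simp add: algebra_simps)
  show u0: "?u > 0" using tb_props[OF L mu p(1) G] by blast
  have "p*L*G*?u^2 > 0" using u0 L p G by simp
  hence "(L+G*mu)*(1-p*?u) > 0" using e by simp
  thus "p*?u < 1" using cpos[OF L mu G] by (simp add: zero_less_mult_iff)
qed

lemma tb_anti:
  assumes G1: "G1 > 0" and G12: "G1 \<le> G2"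
  shows "thetabar L mu p G2 \<le> thetabar L mu p G1"
proof (rule ccontr)
  let ?u1 = "thetabar L mu p G1" and ?u2 = "thetabar L mu p G2"
  assume "\<not> ?thesis"
  hence lt: "?u1 < ?u2" by simp
  have G2: "G2 > 0" using G1 G12 by simp
  have "quad L mu p G1 ?u1 < quad L mu p G1 ?u2"
    using tb_eq(3)[OF G1] lt by (intro quad_mono[OF L mu p(1) G1]) auto
  hence q1: "quad L mu p G1 ?u2 > 0" using tb_props[OF L mu p(1) G1] by simp
  have q2: "quad L mu p G2 ?u2 = 0" using tb_props[OF L mu p(1) G2] by simp
  have "(1 - p*?u2)*(G2 - G1)*L \<ge> 0" using tb_eq(2)[OF G2] G12 L by simp
  hence "G1 * quad L mu p G2 ?u2 - G2 * quad L mu p G1 ?u2 \<ge> 0" using quad_id by simp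
  moreover have "G2 * quad L mu p G1 ?u2 > 0" using G2 q1 by simp
  ultimately show False using q2 by simp
qed

lemma tb_lower:
  assumes G: "G > 0"
  shows "p * (thetabar L mu p G)^2 * G \<ge> 1 - p * thetabar L mu p G"
proof -
  let ?u = "thetabar L mu p G"
  have "(L+G*mu)*(1-p*?u) \<ge> L*(1-p*?u)" using cpos[OF L mu G] tb_eq(2)[OF G]
    by (intro mult_right_mono) auto
  hence "L * (p * ?u^2 * G) \<ge> L * (1 - p*?u)" using tb_eq(1)[OF G] by (simp add: algebra_simps)
  thus ?thesis using L by simp
qed

lemma tb_mu:
  assumes G: "G > 0" and u: "p * thetabar L mu p G \<le> 1/4"
  shows "4 * p * L * (thetabar L mu p G)^2 \<ge> mu"
proof -
  let ?u = "thetabar L mu p G"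
  have "(L+G*mu)*(1-p*?u) \<ge> (G*mu)*(3/4)" using cpos[OF L mu G] u G mu
    by (intro mult_mono) auto
  hence "G * (p*L*?u^2) \<ge> G * (mu * (3/4))" using tb_eq(1)[OF G] by (simp add: algebra_simps)
  hence "p*L*?u^2 \<ge> mu * (3/4)" using G by simp
  thus ?thesis using mu by simp
qed

lemma tb_big:
  assumes G: "G > 0" and lt: "thetabar L mu p G < t0" and t0: "p * t0 \<le> 1"
  shows "G * p * t0^2 > 1 - p * t0"
proof -
  let ?u = "thetabar L mu p G"
  have "quad L mu p G ?u < quad L mu p G t0"
    using tb_eq(3)[OF G] lt by (intro quad_mono[OF L mu p(1) G]) auto
  hence "quad L mu p G t0 > 0" using tb_props[OF L mu p(1) G] by simp
  hence "p*L*G*t0^2 > (L+G*mu)*(1-p*t0)" unfolding quad_def by (simp add: algebra_simps)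
  moreover have "(L+G*mu)*(1-p*t0) \<ge> L*(1-p*t0)" using cpos[OF L mu G] t0
    by (intro mult_right_mono) auto
  ultimately have "L * (G*p*t0^2) > L * (1 - p*t0)" by (simp add: algebra_simps)
  thus ?thesis using L by simp
qed

lemma exp_le_inv: fixes x :: real assumes "0 \<le> x" "x < 1" shows "exp x \<le> 1/(1-x)"
proof -
  have "1 + (-x) \<le> exp (-x)" by (rule exp_ge_add_one_self)
  hence "exp x * (1 - x) \<le> exp x * exp (-x)" by (intro mult_left_mono) auto
  also have "\<dots> = 1" by (simp add: exp_minus)
  finally show ?thesis using assms by (simp add: le_divide_eq)
qed

lemma step:
  assumes G: "G > 0"
  defines "t0 \<equiv> theta_min p alpha tau beta"
    and "\<theta> \<equiv> theta_step L mu p alpha tau beta G"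
    and "\<gamma> \<equiv> gamma_step L mu p alpha tau beta G"
  shows "0 < \<theta>" "\<theta> \<le> t0" "p*\<theta> \<le> 1/4" "1 - p*\<theta> \<noteq> 0" "\<gamma> \<ge> 0"
    "G + \<gamma> = G / (1 - p*\<theta>)" "\<gamma> = p*\<theta>*(G+\<gamma>)"
    "L * \<theta> * \<gamma> \<le> L + G*mu"
    "G + \<gamma> \<ge> G * exp (p*\<theta>)"
    "G \<ge> 1/(4*p*t0^2) \<Longrightarrow> p * \<theta>^2 * (G+\<gamma>) \<ge> 1/4"
    "\<theta> < t0 \<Longrightarrow> G * p * t0^2 > 3/4"
    "p*\<theta> \<ge> min (sqrt (p*mu/(4*L))) (p*t0)"
proof -
  let ?u = "thetabar L mu p G"
  have th: "\<theta> = min ?u t0" unfolding \<theta>_def theta_step_def t0_def by simp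
  have ga: "\<gamma> = p*\<theta>*G/(1-p*\<theta>)" unfolding \<gamma>_def gamma_step_def \<theta>_def by simp
  note tm = tmin_facts[folded t0_def]
  note ue = tb_eq[OF G]
  show th0: "0 < \<theta>" using th tm ue by simp
  show "\<theta> \<le> t0" using th by simp
  have "p*\<theta> \<le> p*t0" using th p by (intro mult_left_mono) auto
  thus pth: "p*\<theta> \<le> 1/4" using tm by simp
  show "1 - p*\<theta> \<noteq> 0" using pth by simp
  have pth0: "p*\<theta> > 0" using p th0 by simp
  show "\<gamma> \<ge> 0" unfolding ga using pth pth0 G by simp
  show Gg: "G + \<gamma> = G / (1 - p*\<theta>)" unfolding ga using pth by (simp add: field_simps)
  show gg: "\<gamma> = p*\<theta>*(G+\<gamma>)" unfolding Gg ga using pth by (simp add: field_simps)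
  have "\<theta>^2 \<le> ?u^2" using th th0 by (intro power_mono) auto
  hence "p*L*G*\<theta>^2 \<le> p*L*G*?u^2" using p L G by (intro mult_left_mono) auto
  moreover have "1 - p*?u \<le> 1 - p*\<theta>" using th p by (simp add: mult_left_mono)
  ultimately have "p*L*G*\<theta>^2/(1 - p*\<theta>) \<le> p*L*G*?u^2/(1-p*?u)"
    using ue p L G cpos[OF L mu G] by (intro frac_le) auto
  also have "\<dots> = L + G*mu" using ue by simp
  finally show "L * \<theta> * \<gamma> \<le> L + G*mu" unfolding ga by (simp add: power2_eq_square algebra_simps)
  have "G * exp (p*\<theta>) \<le> G * (1/(1-p*\<theta>))" using G pth pth0 exp_le_inv[of "p*\<theta>"]
    by (intro mult_left_mono) auto
  thus "G + \<gamma> \<ge> G * exp (p*\<theta>)" using Gg by simp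
  have GG: "G \<le> G + \<gamma>" using \<open>\<gamma> \<ge> 0\<close> by simp
  show "p * \<theta>^2 * (G+\<gamma>) \<ge> 1/4" if G4: "G \<ge> 1/(4*p*t0^2)"
  proof (cases "?u \<le> t0")
    case True
    hence "\<theta> = ?u" using th by simp
    hence "p * \<theta>^2 * G \<ge> 3/4" using tb_lower[OF G] pth by simp
    moreover have "p * \<theta>^2 * G \<le> p * \<theta>^2 * (G+\<gamma>)" using GG p by (intro mult_left_mono) auto
    ultimately show ?thesis by simp
  next
    case False
    hence "\<theta> = t0" using th by simp
    moreover have "p * t0^2 * G \<ge> p * t0^2 * (1/(4*p*t0^2))" using G4 p tm by (intro mult_left_mono) auto
    moreover have "p * t0^2 * (1/(4*p*t0^2)) = 1/4" using p tm by simp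
    moreover have "p * t0^2 * G \<le> p * t0^2 * (G+\<gamma>)" using GG p by (intro mult_left_mono) auto
    ultimately show ?thesis by simp
  qed
  show "G * p * t0^2 > 3/4" if "\<theta> < t0"
  proof -
    have "?u < t0" using that th by simp
    hence "G * p * t0^2 > 1 - p*t0" using tm by (intro tb_big[OF G]) auto
    thus ?thesis using tm by simp
  qed
  show "p*\<theta> \<ge> min (sqrt (p*mu/(4*L))) (p*t0)"
  proof (cases "?u \<le> t0")
    case True
    hence u: "\<theta> = ?u" using th by simp
    have "4 * p * L * ?u^2 \<ge> mu" using tb_mu[OF G] pth u by simp
    hence "p*mu/(4*L) \<le> (p*?u)^2" using L p by (simp add: field_simps power2_eq_square)
    hence "sqrt (p*mu/(4*L)) \<le> sqrt ((p*?u)^2)" by (rule real_sqrt_le_mono)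
    also have "\<dots> = p*\<theta>" using u pth0 by simp
    finally show ?thesis by simp
  next
    case False
    thus ?thesis using th by simp
  qed
qed

lemma step_sqrt:
  assumes G: "G > 0" and G4: "G \<ge> 1/(4*p*(theta_min p alpha tau beta)^2)"
  shows "sqrt (G + gamma_step L mu p alpha tau beta G) \<ge> sqrt G + sqrt p / 4"
proof -
  define \<theta> where "\<theta> = theta_step L mu p alpha tau beta G"
  define H where "H = G + gamma_step L mu p alpha tau beta G"
  note st = step[OF G, folded \<theta>_def H_def]
  define A where "A = sqrt H"
  define B where "B = sqrt G"
  have HG: "G \<le> H" unfolding H_def using st(5) by simp
  have AB: "B \<le> A" unfolding A_def B_def using HG by simp
  have A0: "A > 0" unfolding A_def using HG G by simp
  have B0: "B \<ge> 0" unfolding B_def using G by simp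
  have "(A-B)*(A+B) = H - G" unfolding A_def B_def using HG G by (simp add: algebra_simps)
  also have "\<dots> = gamma_step L mu p alpha tau beta G" unfolding H_def by simp
  also have "\<dots> = p*\<theta>*H" by (rule st(7))
  also have "\<dots> = (p*\<theta>*A)*A"
  proof -
    have AA: "A*A = H" unfolding A_def using HG G by simp
    have "(p*\<theta>*A)*A = (p*\<theta>)*(A*A)" by (simp only: mult.assoc)
    thus ?thesis by (simp only: AA)
  qed
  finally have e: "(A-B)*(A+B) = (p*\<theta>*A)*A" .
  have "(A-B)*(A+B) \<le> (A-B)*(2*A)" using AB B0 by (intro mult_left_mono) auto
  hence "(A-B)*(A+B) \<le> ((A-B)*2)*A" by (simp add: algebra_simps)
  hence "(p*\<theta>*A)*A \<le> ((A-B)*2)*A" using e by simp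
  hence 1: "p*\<theta>*A \<le> (A-B)*2" using A0 by simp
  have "(sqrt p / 2)^2 = p/4" using p by (simp add: power_divide)
  also have "\<dots> \<le> p * (p*\<theta>^2*H)" using st(10)[OF G4] p by simp
  also have "\<dots> = (p*\<theta>*A)^2"
  proof -
    have A2: "A^2 = H" unfolding A_def using HG G by (simp only: real_sqrt_pow2)
    have "(p*\<theta>*A)^2 = p^2*\<theta>^2*A^2" by (simp only: power_mult_distrib)
    also have "\<dots> = p^2*\<theta>^2*H" by (simp only: A2)
    also have "\<dots> = p * (p*\<theta>^2*H)" by (simp add: power2_eq_square)
    finally show ?thesis by simp
  qed
  finally have sq: "(sqrt p / 2)^2 \<le> (p*\<theta>*A)^2" .
  have "0 < p*\<theta>*A" using st(1) p(1) A0 by simp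
  hence nn: "0 \<le> p*\<theta>*A" by (rule less_imp_le)
  have "sqrt p / 2 \<le> p*\<theta>*A" by (rule power2_le_imp_le[OF sq nn])
  moreover have "(A-B)*2 = 2*A - 2*B" by simp
  ultimately have "sqrt p/4 \<le> A - B" using 1 by linarith
  thus ?thesis unfolding A_def B_def H_def by linarith
qed

context
  fixes G0 :: real assumes G0: "G0 \<ge> 1"
begin

lemma Gm_ge: "Gam L mu p alpha tau beta G0 t \<ge> G0"
proof (induction t)
  case (Suc t)
  hence "Gam L mu p alpha tau beta G0 t > 0" using G0 by simp
  from step(5)[OF this] Suc show ?case by simp
qed simp

lemma Gm_pos: "Gam L mu p alpha tau beta G0 t > 0" using Gm_ge[of t] G0 by simp

lemma Gm_inc: "incseq (Gam L mu p alpha tau beta G0)"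
  by (rule incseq_SucI) (use step(5)[OF Gm_pos] in simp)

lemma Gm_exp:
  "Gam L mu p alpha tau beta G0 t \<ge> G0 * exp (real t * min (sqrt (p*mu/(4*L))) (p*theta_min p alpha tau beta))"
proof (induction t)
  case (Suc t)
  let ?m = "min (sqrt (p*mu/(4*L))) (p*theta_min p alpha tau beta)"
  let ?G = "Gam L mu p alpha tau beta G0 t"
  note st = step[OF Gm_pos[of t]]
  have "G0 * exp (real (Suc t) * ?m) = G0 * exp (real t * ?m) * exp ?m"
    by (simp add: algebra_simps exp_add[symmetric])
  also have "\<dots> \<le> ?G * exp (p * theta_step L mu p alpha tau beta ?G)"
    using Suc st(12) Gm_pos[of t] G0 by (intro mult_mono) auto
  also have "\<dots> \<le> Gam L mu p alpha tau beta G0 (Suc t)" using st(9) by simp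
  finally show ?case .
qed simp

lemma Gm_min:
  "Gam L mu p alpha tau beta G0 t \<ge> min (G0 * exp (real t * p * theta_min p alpha tau beta)) (3/(4*p*(theta_min p alpha tau beta)^2))"
proof (induction t)
  case (Suc t)
  let ?t0 = "theta_min p alpha tau beta"
  let ?G = "Gam L mu p alpha tau beta G0 t"
  let ?th = "theta_step L mu p alpha tau beta ?G"
  note st = step[OF Gm_pos[of t]]
  have GS: "Gam L mu p alpha tau beta G0 (Suc t) \<ge> ?G * exp (p * ?th)" using st(9) by simp
  show ?case
  proof (cases "?th < ?t0")
    case True
    hence "?G * p * ?t0^2 > 3/4" using st(11) by simp
    hence "?G > 3/(4*p*?t0^2)" using p tmin_facts by (simp add: field_simps)
    moreover have "?G \<le> Gam L mu p alpha tau beta G0 (Suc t)" using st(5) by simp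
    ultimately show ?thesis by simp
  next
    case False
    hence th: "?th = ?t0" using st(2) by simp
    have "min (G0 * exp (real (Suc t) * p * ?t0)) (3/(4*p*?t0^2))
        \<le> min (G0 * exp (real t * p * ?t0)) (3/(4*p*?t0^2)) * exp (p * ?t0)"
    proof -
      have m1: "G0 * exp (real (Suc t) * p * ?t0) = G0 * exp (real t * p * ?t0) * exp (p * ?t0)"
        by (simp add: algebra_simps exp_add[symmetric])
      have "3/(4*p*?t0^2) * 1 \<le> 3/(4*p*?t0^2) * exp (p * ?t0)"
        using p tmin_facts by (intro mult_left_mono) auto
      hence m2: "3/(4*p*?t0^2) \<le> 3/(4*p*?t0^2) * exp (p * ?t0)" by (simp only: mult_1_right)
      show ?thesis by (rule min_help[OF m1 m2 exp_ge_zero])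
    qed
    also have "\<dots> \<le> ?G * exp (p * ?t0)" using Suc by simp
    finally show ?thesis using GS th by simp
  qed
qed simp

lemma Gm_sqrt:
  assumes "Gam L mu p alpha tau beta G0 n \<ge> 1/(4*p*(theta_min p alpha tau beta)^2)"
  shows "sqrt (Gam L mu p alpha tau beta G0 (n + k)) \<ge> sqrt (Gam L mu p alpha tau beta G0 n) + real k * sqrt p / 4"
proof (induction k)
  case (Suc k)
  have "Gam L mu p alpha tau beta G0 n \<le> Gam L mu p alpha tau beta G0 (n+k)"
    using Gm_inc by (simp add: incseq_def)
  hence ge: "Gam L mu p alpha tau beta G0 (n+k) \<ge> 1/(4*p*(theta_min p alpha tau beta)^2)"
    using assms by linarith
  have eq: "Gam L mu p alpha tau beta G0 (n + Suc k) = Gam L mu p alpha tau beta G0 (n+k)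
     + gamma_step L mu p alpha tau beta (Gam L mu p alpha tau beta G0 (n+k))" by simp
  have "sqrt (Gam L mu p alpha tau beta G0 (n + k)) + sqrt p / 4 \<le> sqrt (Gam L mu p alpha tau beta G0 (n + Suc k))"
    unfolding eq by (rule step_sqrt[OF Gm_pos ge])
  moreover have "real (Suc k) * sqrt p / 4 = real k * sqrt p/4 + sqrt p/4" by (simp add: algebra_simps add_divide_distrib)
  ultimately show ?case using Suc by linarith
qed simp

end

end

theorem lemma3:
  fixes L mu p alpha tau beta G0 :: real
  assumes "L > 0" and "mu \<ge> 0" and "L \<ge> mu"
    and "0 < p" and "p \<le> 1"
    and "0 < alpha" and "alpha \<le> 1" and "0 < tau" and "tau \<le> 1" and "0 < beta" and "beta \<le> 1"
    and "G0 \<ge> 1"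
  defines "tmin \<equiv> theta_min p alpha tau beta"
    and "Gm \<equiv> Gam L mu p alpha tau beta G0"
    and "th \<equiv> (\<lambda>t. theta_step L mu p alpha tau beta (Gam L mu p alpha tau beta G0 t))"
    and "ga \<equiv> (\<lambda>t. gamma_step L mu p alpha tau beta (Gam L mu p alpha tau beta G0 t))"
  shows
    "(\<forall>t. (\<exists>r. quad L mu p (Gm t) r = 0 \<and> (\<forall>x. quad L mu p (Gm t) x = 0 \<longrightarrow> x \<le> r))
          \<and> 1 - p * th t \<noteq> 0 \<and> th t \<ge> 0 \<and> ga t \<ge> 0)
     \<and> (\<forall>t. ga t = p * th t * Gm (Suc t))
     \<and> (\<forall>t. L * th t * ga t \<le> L + Gm t * mu)
     \<and> (\<forall>t. Gm t \<ge> G0 / 2 * exp (real t * min (sqrt (p * mu / (4 * L))) (p * tmin)))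
     \<and> (let tbar = max (\<lceil>1 / (p * tmin) * ln (1 / (2 * G0 * p * tmin^2))\<rceil>) 0 in
          (\<forall>t. int t < tbar \<longrightarrow> Gm t \<ge> G0 / 2 * exp (real t * p * tmin))
        \<and> (\<forall>t. int t \<ge> tbar \<longrightarrow>
              Gm t \<ge> 1 / (4 * p * tmin^2) + p * (real_of_int (int t - tbar))^2 / 16))
     \<and> decseq th"
proof -
  note ax = assms(1-11)
  note G0 = assms(12)
  note tm = tmin_facts[OF ax, folded tmin_def]
  have Gpos: "\<And>t. Gm t > 0" unfolding Gm_def by (rule Gm_pos[OF ax G0])
  note st = step[OF ax Gpos, folded tmin_def Gm_def, unfolded Gm_def, folded th_def[THEN meta_eq_to_obj_eq, THEN fun_cong] ga_def[THEN meta_eq_to_obj_eq, THEN fun_cong], folded Gm_def]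
  have GS: "\<And>t. Gm (Suc t) = Gm t + ga t" unfolding Gm_def ga_def by simp
  have P1: "\<forall>t. (\<exists>r. quad L mu p (Gm t) r = 0 \<and> (\<forall>x. quad L mu p (Gm t) x = 0 \<longrightarrow> x \<le> r))
          \<and> 1 - p * th t \<noteq> 0 \<and> th t \<ge> 0 \<and> ga t \<ge> 0"
  proof
    fix t
    have "\<exists>r. quad L mu p (Gm t) r = 0 \<and> (\<forall>x. quad L mu p (Gm t) x = 0 \<longrightarrow> x \<le> r)"
      using tb_props[OF assms(1) assms(2) assms(4) Gpos[of t]] by blast
    thus "(\<exists>r. quad L mu p (Gm t) r = 0 \<and> (\<forall>x. quad L mu p (Gm t) x = 0 \<longrightarrow> x \<le> r))
          \<and> 1 - p * th t \<noteq> 0 \<and> th t \<ge> 0 \<and> ga t \<ge> 0"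
      using st(1,4,5)[of t] by simp
  qed
  have P2: "\<forall>t. ga t = p * th t * Gm (Suc t)" using st(7) GS by simp
  have P3: "\<forall>t. L * th t * ga t \<le> L + Gm t * mu" using st(8) by simp
  have P4: "\<forall>t. Gm t \<ge> G0 / 2 * exp (real t * min (sqrt (p * mu / (4 * L))) (p * tmin))"
  proof
    fix t
    have "Gm t \<ge> G0 * exp (real t * min (sqrt (p * mu / (4 * L))) (p * tmin))"
      using Gm_exp[OF ax G0] unfolding Gm_def tmin_def by simp
    moreover have "G0 / 2 * exp (real t * min (sqrt (p * mu / (4 * L))) (p * tmin))
       \<le> G0 * exp (real t * min (sqrt (p * mu / (4 * L))) (p * tmin))" using G0 by simp
    ultimately show "Gm t \<ge> G0 / 2 * exp (real t * min (sqrt (p * mu / (4 * L))) (p * tmin))" by linarith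
  qed
  have Gmin: "\<And>t. Gm t \<ge> min (G0 * exp (real t * p * tmin)) (3/(4*p*tmin^2))"
    using Gm_min[OF ax G0] unfolding Gm_def tmin_def by simp
  define x where "x = 1 / (p * tmin) * ln (1 / (2 * G0 * p * tmin^2))"
  define tb where "tb = max (\<lceil>x\<rceil>) 0"
  have y0: "1 / (2 * G0 * p * tmin^2) > 0" using G0 tm ax by simp
  have xp: "x * p * tmin = ln (1 / (2 * G0 * p * tmin^2))" unfolding x_def using tm ax by simp
  have P5a: "\<forall>t. int t < tb \<longrightarrow> Gm t \<ge> G0 / 2 * exp (real t * p * tmin)"
  proof (intro allI impI)
    fix t assume "int t < tb"
    hence "int t < \<lceil>x\<rceil>" unfolding tb_def by simp
    hence "real t < x" by (simp add: less_ceiling_iff)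
    hence "real t * p * tmin < x * p * tmin" using tm ax by simp
    hence "exp (real t * p * tmin) < 1 / (2 * G0 * p * tmin^2)" using xp y0 by (metis exp_less_cancel_iff exp_ln)
    hence "G0 / 2 * exp (real t * p * tmin) < G0 / 2 * (1 / (2 * G0 * p * tmin^2))"
      using G0 by (intro mult_strict_left_mono) auto
    also have "\<dots> = 1 / (4 * p * tmin^2)" using G0 by simp
    also have "\<dots> \<le> 3 / (4 * p * tmin^2)" using tm ax by (simp add: divide_right_mono)
    finally have a: "G0 / 2 * exp (real t * p * tmin) < 3 / (4 * p * tmin^2)" .
    have b: "G0 / 2 * exp (real t * p * tmin) \<le> G0 * exp (real t * p * tmin)" using G0 by simp
    show "Gm t \<ge> G0 / 2 * exp (real t * p * tmin)" using a b Gmin[of t] by linarith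
  qed
  define nb where "nb = nat tb"
  have nbt: "int nb = tb" unfolding nb_def tb_def by simp
  have "real nb \<ge> x"
  proof -
    have "x \<le> real_of_int \<lceil>x\<rceil>" by simp
    also have "\<dots> \<le> real_of_int tb" unfolding tb_def by simp
    also have "\<dots> = real nb" using nbt by (metis of_int_of_nat_eq)
    finally show ?thesis .
  qed
  hence "real nb * p * tmin \<ge> x * p * tmin" using tm ax by simp
  hence "exp (real nb * p * tmin) \<ge> 1 / (2 * G0 * p * tmin^2)" using xp y0 by (metis exp_le_cancel_iff exp_ln)
  hence "G0 * exp (real nb * p * tmin) \<ge> G0 * (1 / (2 * G0 * p * tmin^2))" using G0 by (intro mult_left_mono) auto
  moreover have "G0 * (1 / (2 * G0 * p * tmin^2)) = 1 / (2 * p * tmin^2)" using G0 by simp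
  moreover have "1 / (4 * p * tmin^2) \<le> 1 / (2 * p * tmin^2)" using tm ax by (simp add: frac_le)
  moreover have "1 / (4 * p * tmin^2) \<le> 3 / (4 * p * tmin^2)" using tm ax by (simp add: divide_right_mono)
  ultimately have Gnb: "Gm nb \<ge> 1 / (4 * p * tmin^2)" using Gmin[of nb] by linarith
  have P5b: "\<forall>t. int t \<ge> tb \<longrightarrow> Gm t \<ge> 1 / (4 * p * tmin^2) + p * (real_of_int (int t - tb))^2 / 16"
  proof (intro allI impI)
    fix t assume "int t \<ge> tb"
    then obtain k where tk: "t = nb + k" using nbt by (metis le_Suc_ex of_nat_le_iff)
    have kk: "real_of_int (int t - tb) = real k" using tk nbt by simp
    have "sqrt (Gm t) \<ge> sqrt (Gm nb) + real k * sqrt p / 4"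
      using Gm_sqrt[OF ax G0, of nb k] Gnb tk unfolding Gm_def tmin_def by simp
    moreover have "sqrt (Gm nb) + real k * sqrt p / 4 \<ge> 0" using ax Gpos[of nb] by simp
    ultimately have "(sqrt (Gm nb) + real k * sqrt p / 4)^2 \<le> (sqrt (Gm t))^2"
      by (intro power_mono) auto
    also have "\<dots> = Gm t" using Gpos[of t] by simp
    finally have "Gm t \<ge> (sqrt (Gm nb) + real k * sqrt p / 4)^2" .
    moreover have "(sqrt (Gm nb) + real k * sqrt p / 4)^2 = Gm nb + 2 * sqrt (Gm nb) * (real k * sqrt p / 4) + p * (real k)^2 / 16"
      using Gpos[of nb] ax by (simp add: power2_sum power_mult_distrib power_divide)
    moreover have "2 * sqrt (Gm nb) * (real k * sqrt p / 4) \<ge> 0" using ax Gpos[of nb] by simp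
    ultimately show "Gm t \<ge> 1 / (4 * p * tmin^2) + p * (real_of_int (int t - tb))^2 / 16"
      using Gnb kk by simp
  qed
  have P6: "decseq th"
  proof (rule decseq_SucI)
    fix t
    have "Gm t \<le> Gm (Suc t)" using GS st(5)[of t] by simp
    hence "thetabar L mu p (Gm (Suc t)) \<le> thetabar L mu p (Gm t)"
      by (rule tb_anti[OF ax Gpos])
    thus "th (Suc t) \<le> th t" unfolding th_def theta_step_def Gm_def by (simp add: min_le_iff_disj)
  qed
  show ?thesis using P1 P2 P3 P4 P5a P5b P6 unfolding Let_def x_def[symmetric] tb_def[symmetric] by blast
qed

end
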